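(* Let $X$ be a finite set, $H$ a Hilbert space, and $E=(E_{x,x',a,a'})_{x,x',a,a'\in X}\in M_X\otimes M_X\otimes\mathcal B(H)$ a stochastic operator matrix. Then there exist a Hilbert space $K$, an isometry $W:H\to K$ and a block operator unitary $U=(U_{a,x})_{a,x\in X}\in M_X\otimes\mathcal B(K)$ such that $E_{x,x',a,a'}=W^*U_{a,x}^*U_{a',x'}W$ for all $x,x',a,a'\in X$.
   Context: A stochastic operator matrix over $(X,X)$ acting on $H$ is a positive block operator matrix $E=(E_{x,x',a,a'})$, with $E_{x,x',a,a'}\in\mathcal B(H)$, viewed in $M_X\otimes M_X\otimes\mathcal B(H)$ (first $M_X$ indexed by $x,x'$, second by $a,a'$), such that $\sum_{a\in X}E_{x,x',a,a}=\delta_{x,x'}I_H$ for all $x,x'\in X$. A block operator unitary $(U_{a,x})$ is a unitary operator on $K^X=\oplus_{x\in X}K$ written in block form. *)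

theory Defs
  imports "HOL-Analysis.Analysis"
begin

text \<open>HOL-Analysis has no complex inner product spaces, so we introduce the standard
  notion. Convention: the inner product is conjugate-linear in the first argument.\<close>

class complex_inner = real_normed_vector +
  fixes scaleC :: "complex \<Rightarrow> 'a \<Rightarrow> 'a"
    and cinner :: "'a \<Rightarrow> 'a \<Rightarrow> complex"
  assumes scaleC_add_right: "scaleC c (x + y) = scaleC c x + scaleC c y"
    and scaleC_add_left: "scaleC (c + d) x = scaleC c x + scaleC d x"
    and scaleC_scaleC: "scaleC c (scaleC d x) = scaleC (c * d) x"
    and scaleC_one: "scaleC 1 x = x"
    and scaleR_scaleC: "scaleR r x = scaleC (complex_of_real r) x"
    and cinner_conj: "cinner x y = cnj (cinner y x)"
    and cinner_add_right: "cinner x (y + z) = cinner x y + cinner x z"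
    and cinner_scaleC_right: "cinner x (scaleC c y) = c * cinner x y"
    and cinner_Re_nonneg: "0 \<le> Re (cinner x x)"
    and norm_cinner: "norm x = sqrt (Re (cinner x x))"

class chilbert_space = complex_inner + complete_space

instantiation vec :: (complex_inner, finite) complex_inner
begin

definition scaleC_vec :: "complex \<Rightarrow> 'a ^ 'b \<Rightarrow> 'a ^ 'b"
  where "scaleC_vec c x = (\<chi> i. scaleC c (x $ i))"

definition cinner_vec :: "'a ^ 'b \<Rightarrow> 'a ^ 'b \<Rightarrow> complex"
  where "cinner_vec x y = (\<Sum>i\<in>UNIV. cinner (x $ i) (y $ i))"

instance
proof
  fix c d :: complex and r :: real and x y z :: "'a ^ 'b"
  show "scaleC c (x + y) = scaleC c x + scaleC c y"
    by (simp add: scaleC_vec_def vec_eq_iff scaleC_add_right)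
  show "scaleC (c + d) x = scaleC c x + scaleC d x"
    by (simp add: scaleC_vec_def vec_eq_iff scaleC_add_left)
  show "scaleC c (scaleC d x) = scaleC (c * d) x"
    by (simp add: scaleC_vec_def vec_eq_iff scaleC_scaleC)
  show "scaleC 1 x = x"
    by (simp add: scaleC_vec_def vec_eq_iff scaleC_one)
  show "scaleR r x = scaleC (complex_of_real r) x"
    by (simp add: scaleC_vec_def vec_eq_iff scaleR_scaleC)
  show "cinner x y = cnj (cinner y x)"
    by (simp add: cinner_vec_def cinner_conj[of "x $ i" "y $ i" for i])
  show "cinner x (y + z) = cinner x y + cinner x z"
    by (simp add: cinner_vec_def cinner_add_right sum.distrib)
  show "cinner x (scaleC c y) = c * cinner x y"
    by (simp add: cinner_vec_def scaleC_vec_def cinner_scaleC_right sum_distrib_left)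
  show "0 \<le> Re (cinner x x)"
    by (simp add: cinner_vec_def sum_nonneg cinner_Re_nonneg)
  have "\<And>i. (norm (x $ i))\<^sup>2 = Re (cinner (x $ i) (x $ i))"
    by (simp add: norm_cinner cinner_Re_nonneg)
  then show "norm x = sqrt (Re (cinner x x))"
    by (simp add: norm_vec_def L2_set_def cinner_vec_def)
qed

end

instance vec :: (chilbert_space, finite) chilbert_space ..

definition clinear :: "('a::complex_inner \<Rightarrow> 'b::complex_inner) \<Rightarrow> bool" where
  "clinear f \<longleftrightarrow> (\<forall>x y. f (x + y) = f x + f y) \<and> (\<forall>c x. f (scaleC c x) = scaleC c (f x))"

definition bounded_clinear :: "('a::complex_inner \<Rightarrow> 'b::complex_inner) \<Rightarrow> bool" where
  "bounded_clinear f \<longleftrightarrow> clinear f \<and> (\<exists>C. \<forall>x. norm (f x) \<le> norm x * C)"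

definition is_cadjoint :: "('a::complex_inner \<Rightarrow> 'b::complex_inner) \<Rightarrow> ('b \<Rightarrow> 'a) \<Rightarrow> bool" where
  "is_cadjoint T S \<longleftrightarrow> (\<forall>x y. cinner (T x) y = cinner x (S y))"

text \<open>The Hilbert space adjoint \<open>T\<^sup>*\<close> (exists and is unique for bounded operators).\<close>
definition cadjoint :: "('a::complex_inner \<Rightarrow> 'b::complex_inner) \<Rightarrow> ('b \<Rightarrow> 'a)" where
  "cadjoint T = (SOME S. is_cadjoint T S)"

definition is_isometry :: "('a::complex_inner \<Rightarrow> 'b::complex_inner) \<Rightarrow> bool" where
  "is_isometry W \<longleftrightarrow> bounded_clinear W \<and> (\<forall>x. norm (W x) = norm x)"

definition is_unitary :: "('a::complex_inner \<Rightarrow> 'a) \<Rightarrow> bool" where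
  "is_unitary U \<longleftrightarrow> bounded_clinear U \<and>
     (\<exists>S. is_cadjoint U S \<and> S \<circ> U = id \<and> U \<circ> S = id)"

definition block_op :: "('x::finite \<Rightarrow> 'x \<Rightarrow> ('k::complex_inner \<Rightarrow> 'k)) \<Rightarrow> 'k ^ 'x \<Rightarrow> 'k ^ 'x" where
  "block_op U v = (\<chi> a. \<Sum>x\<in>UNIV. U a x (v $ x))"

definition block_unitary :: "('x::finite \<Rightarrow> 'x \<Rightarrow> ('k::complex_inner \<Rightarrow> 'k)) \<Rightarrow> bool" where
  "block_unitary U \<longleftrightarrow> (\<forall>a x. bounded_clinear (U a x)) \<and> is_unitary (block_op U)"

text \<open>Viewed in \<open>M_X \<otimes> M_X \<otimes> B(H)\<close>, it is the operator on
  \<open>\<C>^X \<otimes> \<C>^X \<otimes> H = H^(X\<times>X)\<close> whose \<open>((x,a),(x',a'))\<close> entry is \<open>E\<^sub>x\<^sub>,\<^sub>x\<^sub>'\<^sub>,\<^sub>a\<^sub>,\<^sub>a\<^sub>'\<close>;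
  positivity means \<open>\<langle>\<xi>, E \<xi>\<rangle> \<ge> 0\<close> for all \<open>\<xi>\<close>.\<close>
definition positive_block :: "('x::finite \<Rightarrow> 'x \<Rightarrow> 'x \<Rightarrow> 'x \<Rightarrow> ('h::complex_inner \<Rightarrow> 'h)) \<Rightarrow> bool" where
  "positive_block E \<longleftrightarrow> (\<forall>\<xi> :: 'x \<Rightarrow> 'x \<Rightarrow> 'h.
     (let q = (\<Sum>x\<in>UNIV. \<Sum>x'\<in>UNIV. \<Sum>a\<in>UNIV. \<Sum>a'\<in>UNIV.
                 cinner (\<xi> x a) (E x x' a a' (\<xi> x' a')))
      in Im q = 0 \<and> 0 \<le> Re q))"

definition stochastic_operator_matrix ::
  "('x::finite \<Rightarrow> 'x \<Rightarrow> 'x \<Rightarrow> 'x \<Rightarrow> ('h::complex_inner \<Rightarrow> 'h)) \<Rightarrow> bool" where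
  "stochastic_operator_matrix E \<longleftrightarrow>
     (\<forall>x x' a a'. bounded_clinear (E x x' a a')) \<and>
     positive_block E \<and>
     (\<forall>x x' h. (\<Sum>a\<in>UNIV. E x x' a a h) = (if x = x' then h else 0))"

end

theory Submission
  imports Defs
begin

lemma scaleC_zero_right[simp]: "scaleC c (0::'a::complex_inner) = 0"
proof -
  have "scaleC c (0::'a) = scaleC c (0 + 0)" by simp
  also have "\<dots> = scaleC c 0 + scaleC c 0" by (rule scaleC_add_right)
  finally show ?thesis by simp
qed

lemma scaleC_zero_left[simp]: "scaleC 0 (x::'a::complex_inner) = 0"
proof -
  have "scaleC 0 x = scaleC (0 + 0) x" by simp
  also have "\<dots> = scaleC 0 x + scaleC 0 x" by (rule scaleC_add_left)
  finally show ?thesis by simp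
qed

lemma scaleC_minus_right: "scaleC c (- (x::'a::complex_inner)) = - scaleC c x"
proof -
  have "scaleC c (- x) + scaleC c x = scaleC c (- x + x)" by (rule scaleC_add_right[symmetric])
  then have "scaleC c (- x) + scaleC c x = 0" by simp
  then show ?thesis by (rule eq_neg_iff_add_eq_0[THEN iffD2])
qed

lemma scaleC_diff_right: "scaleC c ((x::'a::complex_inner) - y) = scaleC c x - scaleC c y"
  using scaleC_add_right[of c x "- y"] scaleC_minus_right[of c y] by simp

lemma scaleC_minus_left: "scaleC (- c) (x::'a::complex_inner) = - scaleC c x"
proof -
  have "scaleC (- c) x + scaleC c x = scaleC (- c + c) x" by (rule scaleC_add_left[symmetric])
  then have "scaleC (- c) x + scaleC c x = 0" by simp
  then show ?thesis by (rule eq_neg_iff_add_eq_0[THEN iffD2])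
qed

lemma scaleC_diff_left: "scaleC (c - d) (x::'a::complex_inner) = scaleC c x - scaleC d x"
  using scaleC_add_left[of c "- d" x] scaleC_minus_left[of d x] by simp

lemma scaleC_sum_right: "scaleC c (sum f A) = sum (\<lambda>i. scaleC c (f i :: 'a::complex_inner)) A"
  by (induct A rule: infinite_finite_induct) (auto simp: scaleC_add_right)

lemma scaleC_of_real: "scaleC (complex_of_real r) (x::'a::complex_inner) = r *\<^sub>R x"
  by (rule scaleR_scaleC[symmetric])

lemma cinner_add_left: "cinner ((x::'a::complex_inner) + y) z = cinner x z + cinner y z"
  using cinner_conj[of "x+y" z] cinner_conj[of x z] cinner_conj[of y z] cinner_add_right[of z x y] by simp

lemma cinner_scaleC_left: "cinner (scaleC c (x::'a::complex_inner)) y = cnj c * cinner x y"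
  using cinner_conj[of "scaleC c x" y] cinner_conj[of x y] cinner_scaleC_right[of y c x] by simp

lemma cinner_zero_right[simp]: "cinner (x::'a::complex_inner) 0 = 0"
proof -
  have "cinner x (0::'a) = cinner x (0 + 0)" by simp
  also have "\<dots> = cinner x 0 + cinner x 0" by (rule cinner_add_right)
  finally show ?thesis by simp
qed

lemma cinner_zero_left[simp]: "cinner 0 (x::'a::complex_inner) = 0"
  using cinner_conj[of 0 x] by simp

lemma cinner_minus_right: "cinner (x::'a::complex_inner) (- y) = - (cinner x y)"
proof -
  have "cinner x (- y) + cinner x y = cinner x (- y + y)" by (rule cinner_add_right[symmetric])
  then have "cinner x (- y) + cinner x y = 0" by simp
  then show ?thesis by (rule eq_neg_iff_add_eq_0[THEN iffD2])
qed

lemma cinner_minus_left: "cinner (- (x::'a::complex_inner)) y = - (cinner x y)"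
proof -
  have "cinner (- x) y + cinner x y = cinner (- x + x) y" by (rule cinner_add_left[symmetric])
  then have "cinner (- x) y + cinner x y = 0" by simp
  then show ?thesis by (rule eq_neg_iff_add_eq_0[THEN iffD2])
qed

lemma cinner_diff_right: "cinner (x::'a::complex_inner) (y - z) = cinner x y - cinner x z"
  using cinner_add_right[of x y "- z"] cinner_minus_right[of x z] by simp

lemma cinner_diff_left: "cinner ((x::'a::complex_inner) - y) z = cinner x z - cinner y z"
  using cinner_add_left[of x "- y" z] cinner_minus_left[of y z] by simp

lemma cinner_sum_right: "cinner (x::'a::complex_inner) (sum f A) = sum (\<lambda>i. cinner x (f i)) A"
  by (induct A rule: infinite_finite_induct) (auto simp: cinner_add_right)

lemma cinner_sum_left: "cinner (sum f A) (x::'a::complex_inner) = sum (\<lambda>i. cinner (f i) x) A"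
  by (induct A rule: infinite_finite_induct) (auto simp: cinner_add_left)

lemma cinner_scaleR_right: "cinner (x::'a::complex_inner) (r *\<^sub>R y) = complex_of_real r * cinner x y"
  unfolding scaleR_scaleC cinner_scaleC_right ..

lemma cinner_scaleR_left: "cinner (r *\<^sub>R (x::'a::complex_inner)) y = complex_of_real r * cinner x y"
  unfolding scaleR_scaleC cinner_scaleC_left by simp

lemma cinner_self_Im[simp]: "Im (cinner (x::'a::complex_inner) x) = 0"
proof -
  have "cinner x x = cnj (cinner x x)" by (rule cinner_conj)
  then have "Im (cinner x x) = Im (cnj (cinner x x))" by simp
  then show ?thesis by simp
qed

lemma cinner_self_real: "cinner (x::'a::complex_inner) x = complex_of_real ((norm x)\<^sup>2)"
proof -
  have "(norm x)\<^sup>2 = Re (cinner x x)" using norm_cinner[of x] cinner_Re_nonneg[of x] by simp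
  then show ?thesis by (simp add: complex_eq_iff)
qed

lemma norm_sq_cinner: "(norm (x::'a::complex_inner))\<^sup>2 = Re (cinner x x)"
  using norm_cinner[of x] cinner_Re_nonneg[of x] by simp

lemma cinner_self_eq_0: "cinner (x::'a::complex_inner) x = 0 \<longleftrightarrow> x = 0"
  by (simp add: cinner_self_real)

lemma clinearD:
  assumes "clinear T"
  shows clinear_add: "T (x + y) = T x + T y" and clinear_scaleC: "T (scaleC c x) = scaleC c (T x)"
  using assms unfolding clinear_def by auto

lemma clinear_zero: "clinear T \<Longrightarrow> T 0 = 0"
  using clinear_add[of T 0 0] by simp

lemma clinear_minus: "clinear T \<Longrightarrow> T (- x) = - T x"
  using clinear_add[of T "- x" x] clinear_zero[of T] by (simp add: eq_neg_iff_add_eq_0)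

lemma clinear_diff: "clinear T \<Longrightarrow> T (x - y) = T x - T y"
  using clinear_add[of T x "- y"] clinear_minus[of T y] by simp

lemma clinear_scaleR: "clinear T \<Longrightarrow> T (r *\<^sub>R x) = r *\<^sub>R T x"
  unfolding scaleR_scaleC by (rule clinear_scaleC)

lemma clinear_sum: "clinear T \<Longrightarrow> T (sum f A) = sum (\<lambda>i. T (f i)) A"
  by (induct A rule: infinite_finite_induct) (auto simp: clinear_add clinear_zero)

lemma clinear_linear: "clinear T \<Longrightarrow> linear T"
  by (rule linearI) (auto simp: clinear_add clinear_scaleR)

lemma real_quad_lemma:
  fixes a b m :: real
  assumes "\<And>t. 0 \<le> a - 2 * t * m + t\<^sup>2 * m * b" "0 \<le> m" "0 \<le> b"
  shows "m \<le> a * b"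
proof (cases "b = 0")
  case True
  show ?thesis
  proof (rule ccontr)
    assume "\<not> m \<le> a * b"
    then have "m > 0" using True by simp
    have "0 \<le> a - 2 * ((a + 1) / (2 * m)) * m" using assms(1)[of "(a + 1) / (2 * m)"] True by simp
    also have "\<dots> = -1" using \<open>m > 0\<close> by (simp add: field_simps)
    finally show False by simp
  qed
next
  case False
  then have "b > 0" using assms(3) by simp
  have "0 \<le> a - 2 * (1 / b) * m + (1 / b)\<^sup>2 * m * b" by (rule assms(1))
  also have "\<dots> = (a * b - m) / b" using \<open>b > 0\<close> by (simp add: field_simps power2_eq_square)
  finally show ?thesis using \<open>b > 0\<close> by (simp add: divide_nonneg_pos zero_le_divide_iff)
qed

definition hermitian :: "('a::complex_inner \<Rightarrow> 'a) \<Rightarrow> bool" where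
  "hermitian T \<longleftrightarrow> (\<forall>x y. cinner (T x) y = cinner x (T y))"

definition posop :: "('a::complex_inner \<Rightarrow> 'a) \<Rightarrow> bool" where
  "posop T \<longleftrightarrow> (\<forall>x. 0 \<le> Re (cinner x (T x)))"

lemma pos_form_CS:
  fixes T :: "'a::complex_inner \<Rightarrow> 'a"
  assumes lin: "clinear T" and herm: "hermitian T" and pos: "posop T"
  shows "(cmod (cinner u (T v)))\<^sup>2 \<le> Re (cinner u (T u)) * Re (cinner v (T v))"
proof -
  define w where "w = cinner u (T v)"
  have vu: "cinner v (T u) = cnj w"
    using herm unfolding hermitian_def w_def by (metis cinner_conj)
  have key: "0 \<le> Re (cinner u (T u)) - 2 * t * (cmod w)\<^sup>2 + t\<^sup>2 * (cmod w)\<^sup>2 * Re (cinner v (T v))" for t :: real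
  proof -
    define s where "s = complex_of_real t * cnj w"
    define z where "z = u - scaleC s v"
    have Tz: "T z = T u - scaleC s (T v)" unfolding z_def using lin by (simp add: clinear_diff clinear_scaleC)
    have "cinner z (T z) = cinner u (T u) - s * w - cnj s * cnj w + cnj s * s * cinner v (T v)"
      unfolding Tz unfolding z_def
      by (simp add: cinner_diff_left cinner_diff_right cinner_scaleC_left cinner_scaleC_right vu w_def[symmetric] algebra_simps)
    also have "\<dots> = cinner u (T u) - complex_of_real (2 * t * (cmod w)\<^sup>2) + complex_of_real (t\<^sup>2 * (cmod w)\<^sup>2) * cinner v (T v)"
    proof -
      have wc: "cnj w * w = complex_of_real ((cmod w)\<^sup>2)" by (simp only: complex_norm_square mult.commute)
      have 1: "s * w = complex_of_real (t * (cmod w)\<^sup>2)" unfolding s_def using wc by (simp add: mult.assoc)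
      have 2: "cnj s * cnj w = complex_of_real (t * (cmod w)\<^sup>2)" unfolding s_def using wc by (simp add: mult.assoc mult.commute)
      have wc2: "w * cnj w = complex_of_real ((cmod w)\<^sup>2)" using wc by (simp only: mult.commute)
      have 3: "cnj s * s = complex_of_real (t\<^sup>2 * (cmod w)\<^sup>2)" unfolding s_def using wc wc2
        by (simp add: power2_eq_square mult.assoc mult.left_commute)
      show ?thesis unfolding 1 2 3 by simp
    qed
    finally have "Re (cinner z (T z)) = Re (cinner u (T u)) - 2 * t * (cmod w)\<^sup>2 + t\<^sup>2 * (cmod w)\<^sup>2 * Re (cinner v (T v))"
      by simp
    moreover have "0 \<le> Re (cinner z (T z))" using pos unfolding posop_def by simp
    ultimately show ?thesis by simp
  qed
  have "(cmod w)\<^sup>2 \<le> Re (cinner u (T u)) * Re (cinner v (T v))"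
    by (rule real_quad_lemma[OF key]) (use pos in \<open>auto simp: posop_def\<close>)
  then show ?thesis unfolding w_def .
qed

lemma hermitian_id: "hermitian (\<lambda>x. x)" by (simp add: hermitian_def)
lemma posop_id: "posop (\<lambda>x::'a::complex_inner. x)" by (simp add: posop_def cinner_Re_nonneg)
lemma clinear_id: "clinear (\<lambda>x. x)" by (simp add: clinear_def)

lemma cinner_CS: "cmod (cinner (u::'a::complex_inner) v) \<le> norm u * norm v"
proof -
  have "(cmod (cinner u v))\<^sup>2 \<le> Re (cinner u u) * Re (cinner v v)"
    using pos_form_CS[OF clinear_id hermitian_id posop_id, of u v] by simp
  also have "\<dots> = (norm u * norm v)\<^sup>2" by (simp add: norm_sq_cinner power_mult_distrib)
  finally show ?thesis by (rule power2_le_imp_le) simp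
qed

subclass (in chilbert_space) banach ..

lemma norm_scaleC: "norm (scaleC a (x::'a::complex_inner)) = cmod a * norm x"
proof -
  have "(norm (scaleC a x))\<^sup>2 = Re (cinner (scaleC a x) (scaleC a x))" by (rule norm_sq_cinner)
  also have "\<dots> = Re (cnj a * a * cinner x x)" by (simp add: cinner_scaleC_left cinner_scaleC_right mult.assoc)
  also have "cnj a * a = complex_of_real ((cmod a)\<^sup>2)" by (simp only: complex_norm_square mult.commute)
  also have "Re (complex_of_real ((cmod a)\<^sup>2) * cinner x x) = (cmod a * norm x)\<^sup>2"
    by (simp add: norm_sq_cinner power_mult_distrib)
  finally show ?thesis by (simp add: power2_eq_iff_nonneg)
qed

lemma scaleC_scaleR_commute: "scaleC a (r *\<^sub>R (x::'a::complex_inner)) = r *\<^sub>R scaleC a x"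
  by (simp add: scaleR_scaleC scaleC_scaleC mult.commute)

lemma bounded_linear_scaleC: "bounded_linear (\<lambda>x::'a::complex_inner. scaleC a x)"
  by (rule bounded_linear_intro[where K="cmod a"]) (auto simp: scaleC_add_right scaleC_scaleR_commute norm_scaleC)

lemma bounded_linear_cinner_left: "bounded_linear (\<lambda>u::'a::complex_inner. cinner u y)"
proof (rule bounded_linear_intro[where K="norm y"])
  show "cinner (u + v) y = cinner u y + cinner v y" for u v by (rule cinner_add_left)
  show "cinner (r *\<^sub>R u) y = r *\<^sub>R cinner u y" for r u by (simp add: cinner_scaleR_left scaleR_conv_of_real)
  show "norm (cinner u y) \<le> norm u * norm y" for u using cinner_CS[of u y] by simp
qed

lemma bounded_linear_cinner_right: "bounded_linear (\<lambda>u::'a::complex_inner. cinner y u)"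
proof (rule bounded_linear_intro[where K="norm y"])
  show "cinner y (u + v) = cinner y u + cinner y v" for u v by (rule cinner_add_right)
  show "cinner y (r *\<^sub>R u) = r *\<^sub>R cinner y u" for r u by (simp add: cinner_scaleR_right scaleR_conv_of_real)
  show "norm (cinner y u) \<le> norm u * norm y" for u using cinner_CS[of y u] by (simp add: mult.commute)
qed

lemma bounded_clinear_iff: "bounded_clinear f \<longleftrightarrow> clinear f \<and> bounded_linear f"
proof
  assume "bounded_clinear f"
  then obtain C where "clinear f" "\<And>x. norm (f x) \<le> norm x * C" unfolding bounded_clinear_def by blast
  then show "clinear f \<and> bounded_linear f"
    by (auto intro!: bounded_linear_intro[where K=C] simp: clinear_add clinear_scaleR)
next
  assume "clinear f \<and> bounded_linear f"
  then show "bounded_clinear f" unfolding bounded_clinear_def using bounded_linear.bounded by blast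
qed

lemma bounded_clinearI: "clinear f \<Longrightarrow> (\<And>x. norm (f x) \<le> norm x * C) \<Longrightarrow> bounded_clinear f"
  unfolding bounded_clinear_def by blast

lemma clinear_compose: "clinear f \<Longrightarrow> clinear g \<Longrightarrow> clinear (\<lambda>x. f (g x))"
  by (simp add: clinear_def)

lemma clinear_funpow: fixes f :: "'a::complex_inner \<Rightarrow> 'a" assumes "clinear f" shows "clinear (f ^^ k)"
proof (induct k)
  case 0
  have "(f ^^ 0) = (\<lambda>x. x)" by (simp add: id_def)
  then show ?case by (simp add: clinear_def)
next
  case (Suc k)
  have "(f ^^ Suc k) = (\<lambda>x. f ((f ^^ k) x))" by (simp add: o_def)
  then show ?case using clinear_compose[OF assms Suc] by simp
qed

lemma hermitian_funpow: "hermitian f \<Longrightarrow> hermitian (f ^^ k)"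
  by (induct k) (auto simp: hermitian_def funpow.simps funpow_swap1)

lemma hermitian_eq: "hermitian f \<Longrightarrow> cinner (f x) y = cinner x (f y)"
  by (simp add: hermitian_def)

lemma cinner_ext: "(\<And>z. cinner z x = cinner z y) \<Longrightarrow> (x::'a::complex_inner) = y"
proof -
  assume "\<And>z. cinner z x = cinner z y"
  then have "cinner (x - y) (x - y) = 0" by (simp add: cinner_diff_right)
  then show ?thesis by (simp add: cinner_self_eq_0)
qed

lemma is_cadjoint_unique: "is_cadjoint T S1 \<Longrightarrow> is_cadjoint T S2 \<Longrightarrow> S1 = S2"
  unfolding is_cadjoint_def by (metis cinner_ext ext)

lemma cadjoint_eqI: "is_cadjoint T S \<Longrightarrow> cadjoint T = S"
  unfolding cadjoint_def by (metis (mono_tags, lifting) is_cadjoint_unique someI_ex)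

function cc :: "nat \<Rightarrow> real" where
  "cc n = (if n = 0 then 0 else if n = 1 then 1/2 else (\<Sum>i\<in>{1..<n}. cc i * cc (n - i)) / 2)"
  by auto
termination by (relation "Wellfounded.measure id") auto

declare cc.simps[simp del]

lemma cc_0[simp]: "cc 0 = 0" by (simp add: cc.simps)
lemma cc_1[simp]: "cc (Suc 0) = 1/2" by (simp add: cc.simps)
lemma cc_ge2: "n \<ge> 2 \<Longrightarrow> cc n = (\<Sum>i\<in>{1..<n}. cc i * cc (n - i)) / 2"
  by (subst cc.simps) simp

lemma cc_nonneg: "0 \<le> cc n"
proof (induct n rule: less_induct)
  case (less n)
  show ?case
    by (subst cc.simps) (auto intro!: sum_nonneg mult_nonneg_nonneg less)
qed

definition dd :: "nat \<Rightarrow> real" where "dd k = (\<Sum>i\<le>k. cc i * cc (k - i))"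

lemma dd_eq: "dd k = 2 * cc k - (if k = 1 then 1 else 0)"
proof -
  consider "k = 0" | "k = 1" | "k \<ge> 2" by linarith
  then show ?thesis
  proof cases
    case 1 then show ?thesis by (simp add: dd_def)
  next
    case 2 then show ?thesis by (simp add: dd_def)
  next
    case 3
    have "{..k} = insert 0 (insert k {1..<k})" using 3 by auto
    then have "dd k = (\<Sum>i\<in>{1..<k}. cc i * cc (k - i))"
      unfolding dd_def using 3 by simp
    then show ?thesis using 3 cc_ge2[OF 3] by simp
  qed
qed

definition cs :: "nat \<Rightarrow> real" where "cs N = (\<Sum>k<N. cc k)"

lemma cs_nonneg: "0 \<le> cs N" unfolding cs_def by (auto intro!: sum_nonneg cc_nonneg)

lemma sum_dd: "N \<ge> 2 \<Longrightarrow> (\<Sum>k<N. dd k) = 2 * cs N - 1"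
proof -
  assume N: "N \<ge> 2"
  have "(\<Sum>k<N. dd k) = (\<Sum>k<N. 2 * cc k) - (\<Sum>k<N. (if k = 1 then 1 else 0))"
    unfolding dd_eq by (simp add: sum_subtractf)
  also have "(\<Sum>k<N. (if k = 1 then 1 else 0::real)) = 1" using N by (simp add: sum.delta)
  finally show ?thesis by (simp add: cs_def sum_distrib_left)
qed

lemma sum_dd_triangle: "(\<Sum>k<N. dd k) = (\<Sum>(i,j)\<in>{(i,j). i+j < N}. cc i * cc j)"
  unfolding dd_def by (rule sum.triangle_reindex[symmetric])

lemma cs_sq: "cs N ^ 2 = (\<Sum>(i,j)\<in>{..<N}\<times>{..<N}. cc i * cc j)"
  unfolding cs_def power2_eq_square sum_product sum.cartesian_product by simp

lemma triangle_le: "(\<Sum>(i,j)\<in>{(i,j). i+j < Suc N}. cc i * cc j) \<le> cs N ^ 2"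
proof -
  let ?S = "{(i,j). i+j < Suc N}" and ?T = "{..<N}\<times>{..<N}"
  have fin: "finite ?S"
    by (rule finite_subset[of _ "{..N}\<times>{..N}"]) auto
  have "(\<Sum>(i,j)\<in>?S. cc i * cc j) = (\<Sum>(i,j)\<in>?S \<inter> ?T. cc i * cc j)"
  proof (rule sum.mono_neutral_right[OF fin])
    show "?S \<inter> ?T \<subseteq> ?S" by auto
    show "\<forall>p\<in>?S - ?S \<inter> ?T. (case p of (i,j) \<Rightarrow> cc i * cc j) = 0"
    proof
      fix p assume "p \<in> ?S - ?S \<inter> ?T"
      then obtain i j where p: "p = (i,j)" "i + j < Suc N" "\<not> (i < N \<and> j < N)" by auto
      then have "i = 0 \<or> j = 0" by auto
      then show "(case p of (i,j) \<Rightarrow> cc i * cc j) = 0" using p by auto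
    qed
  qed
  also have "\<dots> \<le> (\<Sum>(i,j)\<in>?T. cc i * cc j)"
    by (rule sum_mono2) (auto intro!: mult_nonneg_nonneg cc_nonneg)
  finally show ?thesis unfolding cs_sq .
qed

lemma triangle_ge: "cs M ^ 2 \<le> (\<Sum>(i,j)\<in>{(i,j). i+j < 2 * M}. cc i * cc j)"
proof -
  have fin: "finite {(i,j). i+j < 2 * M}"
    by (rule finite_subset[of _ "{..2*M}\<times>{..2*M}"]) auto
  show ?thesis unfolding cs_sq
    by (rule sum_mono2[OF fin]) (auto intro!: mult_nonneg_nonneg cc_nonneg)
qed

lemma cs_le_1: "cs N \<le> 1"
proof (induct N)
  case 0 then show ?case by (simp add: cs_def)
next
  case (Suc N)
  show ?case
  proof (cases "N = 0")
    case True then show ?thesis by (simp add: cs_def)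
  next
    case False
    then have "2 * cs (Suc N) - 1 \<le> cs N ^ 2"
      using sum_dd[of "Suc N"] sum_dd_triangle[of "Suc N"] triangle_le[of N] by simp
    moreover have "cs N ^ 2 \<le> 1" using Suc cs_nonneg[of N] by (simp add: power_le_one)
    ultimately show ?thesis by simp
  qed
qed

lemma cs_mono: "N \<le> M \<Longrightarrow> cs N \<le> cs M"
  unfolding cs_def by (rule sum_mono2) (auto intro: cc_nonneg)

lemma summable_cc: "summable cc"
  using cs_le_1 cc_nonneg unfolding cs_def
  by (intro summableI_nonneg_bounded) auto

lemma cs_tendsto: "cs \<longlonglongrightarrow> suminf cc"
  unfolding cs_def using summable_cc by (rule summable_LIMSEQ)

lemma cs_diff_tendsto: "(\<lambda>M. cs (2 * M) ^ 2 - cs M ^ 2) \<longlonglongrightarrow> 0"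
proof -
  have sm: "strict_mono (\<lambda>M::nat. 2 * M)" by (rule strict_monoI) simp
  have "(\<lambda>M. cs (2 * M)) \<longlonglongrightarrow> suminf cc"
    using LIMSEQ_subseq_LIMSEQ[OF cs_tendsto sm] by (simp add: o_def)
  then have "(\<lambda>M. cs (2 * M) ^ 2 - cs M ^ 2) \<longlonglongrightarrow> suminf cc ^ 2 - suminf cc ^ 2"
    by (intro tendsto_intros cs_tendsto)
  then show ?thesis by simp
qed

locale contr =
  fixes B :: "'a::chilbert_space \<Rightarrow> 'a"
  assumes Blin: "clinear B" and Bherm: "hermitian B" and Bnorm: "\<And>x. norm (B x) \<le> norm x"
begin

lemma Bk_lin: "clinear (B ^^ k)" by (rule clinear_funpow[OF Blin])
lemma Bk_herm: "hermitian (B ^^ k)" by (rule hermitian_funpow[OF Bherm])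
lemma Bk_norm: "norm ((B ^^ k) x) \<le> norm x"
  by (induct k) (auto intro: order_trans[OF Bnorm])

definition YN :: "nat \<Rightarrow> 'a \<Rightarrow> 'a" where "YN N x = (\<Sum>k<N. cc k *\<^sub>R (B ^^ k) x)"
definition Y :: "'a \<Rightarrow> 'a" where "Y x = (\<Sum>k. cc k *\<^sub>R (B ^^ k) x)"

lemma term_norm: "norm (cc k *\<^sub>R (B ^^ k) x) \<le> cc k * norm x"
  using Bk_norm[of k x] cc_nonneg[of k] by (simp add: mult_left_mono)

lemma summable_terms: "summable (\<lambda>k. cc k *\<^sub>R (B ^^ k) x)"
proof (rule summable_comparison_test'[where g="\<lambda>n. cc n * norm x" and N=0])
  show "norm (cc n *\<^sub>R (B ^^ n) x) \<le> cc n * norm x" for n using term_norm by blast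
  show "summable (\<lambda>n. cc n * norm x)" using summable_cc by (rule summable_mult2)
qed

lemma YN_tendsto: "(\<lambda>N. YN N x) \<longlonglongrightarrow> Y x"
  unfolding YN_def Y_def using summable_terms by (rule summable_LIMSEQ)

lemma YN_norm: "norm (YN N x) \<le> norm x"
proof -
  have "norm (YN N x) \<le> (\<Sum>k<N. cc k * norm x)"
    unfolding YN_def by (rule order_trans[OF norm_sum sum_mono]) (rule term_norm)
  also have "\<dots> = cs N * norm x" by (simp add: cs_def sum_distrib_right)
  also have "\<dots> \<le> norm x" using cs_le_1[of N] cs_nonneg[of N] by (simp add: mult_left_le_one_le)
  finally show ?thesis .
qed

lemma Y_norm: "norm (Y x) \<le> norm x"
proof (rule LIMSEQ_le_const2)
  show "(\<lambda>N. norm (YN N x)) \<longlonglongrightarrow> norm (Y x)" by (intro tendsto_intros YN_tendsto)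
  show "\<exists>N. \<forall>n\<ge>N. norm (YN n x) \<le> norm x" using YN_norm by blast
qed

lemma YN_add: "YN N (x + y) = YN N x + YN N y"
  unfolding YN_def using Bk_lin by (simp add: clinear_add scaleR_add_right sum.distrib)

lemma YN_scaleC: "YN N (scaleC a x) = scaleC a (YN N x)"
  unfolding YN_def using Bk_lin by (simp add: clinear_scaleC scaleC_sum_right scaleC_scaleR_commute)

lemma YN_lin: "clinear (YN N)"
  unfolding clinear_def using YN_add YN_scaleC by blast

lemma Y_add: "Y (x + y) = Y x + Y y"
proof (rule LIMSEQ_unique)
  show "(\<lambda>N. YN N (x + y)) \<longlonglongrightarrow> Y (x + y)" by (rule YN_tendsto)
  show "(\<lambda>N. YN N (x + y)) \<longlonglongrightarrow> Y x + Y y" unfolding YN_add by (intro tendsto_intros YN_tendsto)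
qed

lemma Y_scaleC: "Y (scaleC a x) = scaleC a (Y x)"
proof (rule LIMSEQ_unique)
  show "(\<lambda>N. YN N (scaleC a x)) \<longlonglongrightarrow> Y (scaleC a x)" by (rule YN_tendsto)
  show "(\<lambda>N. YN N (scaleC a x)) \<longlonglongrightarrow> scaleC a (Y x)"
    unfolding YN_scaleC by (rule bounded_linear.tendsto[OF bounded_linear_scaleC YN_tendsto])
qed

lemma Y_lin: "clinear Y"
  unfolding clinear_def using Y_add Y_scaleC by blast

lemma YN_herm: "cinner (YN N x) y = cinner x (YN N y)"
  unfolding YN_def using Bk_herm
  by (simp add: cinner_sum_left cinner_sum_right cinner_scaleR_left cinner_scaleR_right hermitian_eq)

lemma Y_herm: "hermitian Y"
  unfolding hermitian_def
proof (intro allI)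
  fix x y
  show "cinner (Y x) y = cinner x (Y y)"
  proof (rule LIMSEQ_unique)
    show "(\<lambda>N. cinner (YN N x) y) \<longlonglongrightarrow> cinner (Y x) y"
      by (rule bounded_linear.tendsto[OF bounded_linear_cinner_left YN_tendsto])
    show "(\<lambda>N. cinner (YN N x) y) \<longlonglongrightarrow> cinner x (Y y)"
      unfolding YN_herm by (rule bounded_linear.tendsto[OF bounded_linear_cinner_right YN_tendsto])
  qed
qed

definition g :: "'a \<Rightarrow> nat \<Rightarrow> nat \<Rightarrow> 'a" where "g x i j = (cc i * cc j) *\<^sub>R (B ^^ (i + j)) x"

lemma YN_YN: "YN N (YN N x) = (\<Sum>(i,j)\<in>{..<N}\<times>{..<N}. g x i j)"
proof -
  have "YN N (YN N x) = (\<Sum>i<N. \<Sum>j<N. g x i j)"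
    unfolding YN_def g_def using Bk_lin
    by (simp add: clinear_sum clinear_scaleR scaleR_sum_right funpow_add)
  then show ?thesis by (simp add: sum.cartesian_product)
qed

lemma dd_sum_eq: "(\<Sum>k<N. dd k *\<^sub>R (B ^^ k) x) = (\<Sum>(i,j)\<in>{(i,j). i+j < N}. g x i j)"
proof -
  have "(\<Sum>k<N. dd k *\<^sub>R (B ^^ k) x) = (\<Sum>k<N. \<Sum>i\<le>k. g x i (k - i))"
    unfolding dd_def g_def scaleR_sum_left by (intro sum.cong refl) auto
  then show ?thesis by (simp add: sum.triangle_reindex)
qed

lemma dd_sum_eq2: "N \<ge> 2 \<Longrightarrow> (\<Sum>k<N. dd k *\<^sub>R (B ^^ k) x) = 2 *\<^sub>R YN N x - B x"
proof -
  assume N: "N \<ge> 2"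
  have t: "dd k *\<^sub>R (B ^^ k) x = 2 *\<^sub>R (cc k *\<^sub>R (B ^^ k) x) - (if k = 1 then (B ^^ k) x else 0)" for k
    unfolding dd_eq by (simp add: scaleR_diff_left)
  have "(\<Sum>k<N. dd k *\<^sub>R (B ^^ k) x) = (\<Sum>k<N. 2 *\<^sub>R (cc k *\<^sub>R (B ^^ k) x)) - (\<Sum>k<N. (if k = 1 then (B ^^ k) x else 0))"
    unfolding t by (rule sum_subtractf)
  also have "(\<Sum>k<N. (if k = 1 then (B ^^ k) x else 0)) = B x" using N by (simp add: sum.delta)
  finally show ?thesis by (simp add: YN_def scaleR_sum_right)
qed

lemma key_bound:
  assumes M: "M \<ge> 1"
  shows "norm (YN (2*M) (YN (2*M) x) - (2 *\<^sub>R YN (2*M) x - B x)) \<le> (cs (2*M) ^ 2 - cs M ^ 2) * norm x"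
proof -
  let ?N = "2*M"
  let ?S = "{..<?N}\<times>{..<?N}" and ?T = "{(i,j). i+j < ?N}"
  have sub: "?T \<subseteq> ?S" by auto
  have fin: "finite ?S" by simp
  have "YN ?N (YN ?N x) - (2 *\<^sub>R YN ?N x - B x) = (\<Sum>(i,j)\<in>?S. g x i j) - (\<Sum>(i,j)\<in>?T. g x i j)"
    using dd_sum_eq2[where N="?N" and x=x] dd_sum_eq[where N="?N" and x=x] M YN_YN by simp
  also have "\<dots> = (\<Sum>(i,j)\<in>?S - ?T. g x i j)"
    using sum.subset_diff[OF sub fin, of "\<lambda>(i,j). g x i j"] by simp
  finally have eq: "YN ?N (YN ?N x) - (2 *\<^sub>R YN ?N x - B x) = (\<Sum>(i,j)\<in>?S - ?T. g x i j)" .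
  have "norm (\<Sum>(i,j)\<in>?S - ?T. g x i j) \<le> (\<Sum>(i,j)\<in>?S - ?T. cc i * cc j * norm x)"
  proof (rule order_trans[OF norm_sum sum_mono])
    fix p assume "p \<in> ?S - ?T"
    obtain i j where p: "p = (i,j)" by (cases p)
    have "norm (g x i j) \<le> cc i * cc j * norm x"
      unfolding g_def using Bk_norm[of "i+j" x] cc_nonneg[of i] cc_nonneg[of j]
      by (simp add: mult_left_mono)
    then show "norm (case p of (i,j) \<Rightarrow> g x i j) \<le> (case p of (i,j) \<Rightarrow> cc i * cc j * norm x)"
      using p by simp
  qed
  also have "\<dots> = ((\<Sum>(i,j)\<in>?S. cc i * cc j) - (\<Sum>(i,j)\<in>?T. cc i * cc j)) * norm x"
    using sum.subset_diff[OF sub fin, of "\<lambda>(i,j). cc i * cc j"]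
    by (simp add: sum_distrib_right case_prod_beta)
  also have "\<dots> \<le> (cs ?N ^ 2 - cs M ^ 2) * norm x"
    using triangle_ge[of M] unfolding cs_sq[symmetric] by (intro mult_right_mono) auto
  finally show ?thesis unfolding eq .
qed

lemma YN_YN_tendsto: "(\<lambda>N. YN N (YN N x)) \<longlonglongrightarrow> Y (Y x)"
proof -
  have d: "YN N (YN N x) - Y (Y x) = YN N (YN N x - Y x) + (YN N (Y x) - Y (Y x))" for N
    using YN_lin by (simp add: clinear_diff)
  have "(\<lambda>N. YN N (YN N x) - Y (Y x)) \<longlonglongrightarrow> 0"
  proof (rule Lim_null_comparison)
    show "\<forall>\<^sub>F N in sequentially. norm (YN N (YN N x) - Y (Y x)) \<le> norm (YN N x - Y x) + norm (YN N (Y x) - Y (Y x))"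
      unfolding d by (intro always_eventually allI order_trans[OF norm_triangle_ineq add_right_mono] YN_norm)
    have "(\<lambda>N. YN N x - Y x) \<longlonglongrightarrow> 0" using YN_tendsto[of x] by (simp add: LIM_zero)
    moreover have "(\<lambda>N. YN N (Y x) - Y (Y x)) \<longlonglongrightarrow> 0" using YN_tendsto[of "Y x"] by (simp add: LIM_zero)
    ultimately show "(\<lambda>N. norm (YN N x - Y x) + norm (YN N (Y x) - Y (Y x))) \<longlonglongrightarrow> 0"
      using tendsto_add[OF tendsto_norm_zero tendsto_norm_zero] by simp
  qed
  then show ?thesis by (simp add: LIM_zero_iff)
qed

lemma Y_Y: "Y (Y x) = 2 *\<^sub>R Y x - B x"
proof -
  have sm: "strict_mono (\<lambda>M::nat. 2 * M)" by (rule strict_monoI) simp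
  have A: "(\<lambda>M. YN (2*M) (YN (2*M) x)) \<longlonglongrightarrow> Y (Y x)"
    using LIMSEQ_subseq_LIMSEQ[OF YN_YN_tendsto sm] by (simp add: o_def)
  have C: "(\<lambda>M. YN (2*M) x) \<longlonglongrightarrow> Y x"
    using LIMSEQ_subseq_LIMSEQ[OF YN_tendsto sm] by (simp add: o_def)
  have D: "(\<lambda>M. YN (2*M) (YN (2*M) x) - (2 *\<^sub>R YN (2*M) x - B x)) \<longlonglongrightarrow> 0"
  proof (rule Lim_null_comparison)
    show "\<forall>\<^sub>F M in sequentially. norm (YN (2*M) (YN (2*M) x) - (2 *\<^sub>R YN (2*M) x - B x)) \<le> (cs (2*M) ^ 2 - cs M ^ 2) * norm x"
      using key_bound by (intro eventually_sequentiallyI[of 1]) simp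
    show "(\<lambda>M. (cs (2*M) ^ 2 - cs M ^ 2) * norm x) \<longlonglongrightarrow> 0"
      using tendsto_mult_right_zero[OF cs_diff_tendsto, of "norm x"] by (simp add: mult.commute)
  qed
  have "(\<lambda>M. (YN (2*M) (YN (2*M) x) - (2 *\<^sub>R YN (2*M) x - B x)) + (2 *\<^sub>R YN (2*M) x - B x)) \<longlonglongrightarrow> 0 + (2 *\<^sub>R Y x - B x)"
    by (intro tendsto_intros D C)
  then have "(\<lambda>M. YN (2*M) (YN (2*M) x)) \<longlonglongrightarrow> 2 *\<^sub>R Y x - B x" by simp
  with A show ?thesis by (rule LIMSEQ_unique)
qed

end

lemma op_sqrt:
  fixes A :: "'a::chilbert_space \<Rightarrow> 'a"
  assumes bA: "bounded_clinear A" and hA: "hermitian A" and pA: "posop A"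
  shows "\<exists>R. bounded_clinear R \<and> hermitian R \<and> (\<forall>x. R (R x) = A x)"
proof -
  obtain K0 where K0: "\<And>x. norm (A x) \<le> norm x * K0" and lA: "clinear A"
    using bA unfolding bounded_clinear_def by blast
  define K where "K = max K0 1"
  have K1: "K > 0" unfolding K_def by simp
  have K2: "norm (A x) \<le> norm x * K" for x
  proof -
    have "norm x * K0 \<le> norm x * K" unfolding K_def by (intro mult_left_mono) auto
    then show ?thesis using K0[of x] by linarith
  qed
  note K = K1 K2
  define A' where "A' = (\<lambda>x. (1 / K) *\<^sub>R A x)"
  have lA': "clinear A'" unfolding A'_def clinear_def using lA
    by (simp add: clinear_add clinear_scaleC scaleC_scaleR_commute scaleR_add_right)
  have hA': "hermitian A'" unfolding A'_def hermitian_def using hA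
    by (simp add: cinner_scaleR_left cinner_scaleR_right hermitian_eq)
  have pA': "posop A'" unfolding A'_def posop_def using pA K(1)
    by (simp add: cinner_scaleR_right posop_def)
  have nA': "norm (A' x) \<le> norm x" for x
    unfolding A'_def using K(2)[of x] K(1) by (simp add: field_simps)
  have sqA': "(norm (A' x))\<^sup>2 \<le> Re (cinner x (A' x))" for x
  proof -
    let ?u = "A' x"
    have 1: "(cmod (cinner ?u (A' x)))\<^sup>2 \<le> Re (cinner ?u (A' ?u)) * Re (cinner x (A' x))"
      by (rule pos_form_CS[OF lA' hA' pA'])
    have 2: "cmod (cinner ?u (A' x)) = (norm ?u)\<^sup>2"
      by (simp only: cinner_self_real norm_of_real) simp
    have 3: "Re (cinner ?u (A' ?u)) \<le> (norm ?u)\<^sup>2"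
    proof -
      have "Re (cinner ?u (A' ?u)) \<le> cmod (cinner ?u (A' ?u))" by (rule complex_Re_le_cmod)
      also have "\<dots> \<le> norm ?u * norm (A' ?u)" by (rule cinner_CS)
      also have "\<dots> \<le> norm ?u * norm ?u" by (intro mult_left_mono nA') simp
      finally show ?thesis by (simp add: power2_eq_square)
    qed
    have 4: "0 \<le> Re (cinner x (A' x))" using pA' by (simp add: posop_def)
    have "((norm ?u)\<^sup>2)\<^sup>2 \<le> (norm ?u)\<^sup>2 * Re (cinner x (A' x))"
      using 1 2 order_trans[OF 1 mult_right_mono[OF 3 4]] by simp
    then show ?thesis
      by (cases "norm ?u = 0") (auto simp: power2_eq_square)
  qed
  define B where "B = (\<lambda>x. x - A' x)"
  have lB: "clinear B" unfolding B_def clinear_def using lA'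
    by (simp add: clinear_add clinear_scaleC scaleC_diff_right)
  have hB: "hermitian B" unfolding B_def hermitian_def using hA'
    by (simp add: cinner_diff_left cinner_diff_right hermitian_eq)
  have nB: "norm (B x) \<le> norm x" for x
  proof -
    have re: "Re (cinner (A' x) x) = Re (cinner x (A' x))" using hA' by (simp add: hermitian_eq)
    have "(norm (B x))\<^sup>2 = Re (cinner (x - A' x) (x - A' x))" unfolding B_def by (rule norm_sq_cinner)
    also have "\<dots> = (norm x)\<^sup>2 - 2 * Re (cinner x (A' x)) + (norm (A' x))\<^sup>2"
      using re by (simp add: cinner_diff_left cinner_diff_right norm_sq_cinner)
    also have "\<dots> \<le> (norm x)\<^sup>2"
    proof -
      have "0 \<le> Re (cinner x (A' x))" using pA' by (simp add: posop_def)
      then show ?thesis using sqA'[of x] by linarith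
    qed
    finally show ?thesis by (rule power2_le_imp_le) simp
  qed
  interpret contr B using lB hB nB by unfold_locales auto
  define R where "R = (\<lambda>x. sqrt K *\<^sub>R (x - Y x))"
  have lR: "clinear R" unfolding R_def clinear_def using Y_lin
    by (simp add: clinear_add clinear_scaleC scaleC_diff_right scaleC_scaleR_commute scaleR_add_right
        scaleR_diff_right algebra_simps)
  have bR: "bounded_clinear R"
  proof (rule bounded_clinearI[OF lR, where C="2 * sqrt K"])
    fix x
    have "norm (R x) = sqrt K * norm (x - Y x)" unfolding R_def using K(1) by simp
    also have "\<dots> \<le> sqrt K * (2 * norm x)"
      using norm_triangle_ineq4[of x "Y x"] Y_norm[of x] using K(1) by (intro mult_left_mono) auto
    finally show "norm (R x) \<le> norm x * (2 * sqrt K)" by (simp add: mult_ac)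
  qed
  have hR: "hermitian R" unfolding R_def hermitian_def using Y_herm
    by (simp add: cinner_scaleR_left cinner_scaleR_right cinner_diff_left cinner_diff_right hermitian_eq)
  have RR: "R (R x) = A x" for x
  proof -
    have "R (R x) = K *\<^sub>R ((x - Y x) - Y (x - Y x))"
      unfolding R_def using Y_lin K(1) by (simp add: clinear_scaleR clinear_diff scaleR_diff_right)
    also have "(x - Y x) - Y (x - Y x) = x - B x"
      using Y_lin by (simp add: clinear_diff Y_Y algebra_simps scaleR_2)
    also have "x - B x = A' x" by (simp add: B_def)
    finally show ?thesis using K(1) by (simp add: A'_def)
  qed
  show ?thesis using bR hR RR by blast
qed

lemma vec_scaleC_nth[simp]: "(scaleC c v) $ i = scaleC c (v $ i)"
  by (simp add: scaleC_vec_def)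

lemma bounded_linear_vecI:
  fixes f :: "'a::real_normed_vector \<Rightarrow> 'b::real_normed_vector ^ 'i::finite"
  assumes "\<And>i. bounded_linear (\<lambda>x. f x $ i)"
  shows "bounded_linear f"
proof -
  have "\<exists>K. \<forall>x. norm (f x $ i) \<le> norm x * K" for i
    using bounded_linear.bounded[OF assms[of i]] .
  then obtain K where K: "\<And>i x. norm (f x $ i) \<le> norm x * K i" by metis
  show ?thesis
  proof (rule bounded_linear_intro[where K="\<Sum>i\<in>UNIV. K i"])
    show "f (x + y) = f x + f y" for x y
      by (simp add: vec_eq_iff linear_add[OF bounded_linear.linear[OF assms]])
    show "f (r *\<^sub>R x) = r *\<^sub>R f x" for r x
      by (simp add: vec_eq_iff linear_scale[OF bounded_linear.linear[OF assms]])
    show "norm (f x) \<le> norm x * (\<Sum>i\<in>UNIV. K i)" for x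
    proof -
      have "norm (f x) \<le> (\<Sum>i\<in>UNIV. norm (f x $ i))"
        unfolding norm_vec_def by (rule L2_set_le_sum) simp
      also have "\<dots> \<le> (\<Sum>i\<in>UNIV. norm x * K i)" by (rule sum_mono) (rule K)
      finally show ?thesis by (simp add: sum_distrib_left)
    qed
  qed
qed

lemma bcl_vec:
  fixes f :: "'a::complex_inner \<Rightarrow> 'b::complex_inner ^ 'i::finite"
  assumes "\<And>i. bounded_clinear (\<lambda>x. f x $ i)"
  shows "bounded_clinear f"
proof -
  have cl: "clinear (\<lambda>x. f x $ i)" and bl: "bounded_linear (\<lambda>x. f x $ i)" for i
    using assms[of i] unfolding bounded_clinear_iff by auto
  have "clinear f"
    unfolding clinear_def vec_eq_iff using clinear_add[OF cl] clinear_scaleC[OF cl] by simp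
  moreover have "bounded_linear f" by (rule bounded_linear_vecI[OF bl])
  ultimately show ?thesis unfolding bounded_clinear_iff by simp
qed

lemma bcl_nth: "bounded_clinear (\<lambda>v::'b::complex_inner ^ 'i::finite. v $ i)"
  unfolding bounded_clinear_iff clinear_def by (simp add: bounded_linear_vec_nth)

lemma bcl_zero: "bounded_clinear (\<lambda>x::'a::complex_inner. 0::'b::complex_inner)"
  unfolding bounded_clinear_iff clinear_def by simp

lemma bcl_id: "bounded_clinear (\<lambda>x::'a::complex_inner. x)"
  unfolding bounded_clinear_iff clinear_def by (simp add: bounded_linear_ident)

lemma bcl_compose: "bounded_clinear f \<Longrightarrow> bounded_clinear g \<Longrightarrow> bounded_clinear (\<lambda>x. f (g x))"
  unfolding bounded_clinear_iff by (auto intro: clinear_compose bounded_linear_compose)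

lemma bcl_add: "bounded_clinear f \<Longrightarrow> bounded_clinear g \<Longrightarrow> bounded_clinear (\<lambda>x. f x + g x)"
  unfolding bounded_clinear_iff clinear_def
  by (auto intro: bounded_linear_add simp: scaleC_add_right)

lemma bcl_diff: "bounded_clinear f \<Longrightarrow> bounded_clinear g \<Longrightarrow> bounded_clinear (\<lambda>x. f x - g x)"
  unfolding bounded_clinear_iff clinear_def
  by (auto intro: bounded_linear_sub simp: scaleC_diff_right)

lemma bcl_sum: "(\<And>i. i \<in> I \<Longrightarrow> bounded_clinear (f i)) \<Longrightarrow> bounded_clinear (\<lambda>x. \<Sum>i\<in>I. f i x)"
proof (induct I rule: infinite_finite_induct)
  case (infinite A) then show ?case by (simp add: bcl_zero)
next
  case empty then show ?case by (simp add: bcl_zero)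
next
  case (insert a A) then show ?case by (simp add: bcl_add)
qed

lemma bcl_if: "bounded_clinear f \<Longrightarrow> bounded_clinear (\<lambda>x. if P then f x else 0)"
  by (cases P) (simp_all add: bcl_zero)

lemma bcl_clinear: "bounded_clinear f \<Longrightarrow> clinear f"
  unfolding bounded_clinear_def by simp

lemma hermitian_from_real:
  fixes T :: "'a::complex_inner \<Rightarrow> 'a"
  assumes lin: "clinear T" and re: "\<And>x. Im (cinner x (T x)) = 0"
  shows "hermitian T"
proof -
  define d where "d x y = cinner x (T y) - cinner (T x) y" for x y
  have diag: "d x x = 0" for x
  proof -
    have "cinner (T x) x = cnj (cinner x (T x))" by (rule cinner_conj)
    also have "\<dots> = cinner x (T x)" using re[of x] by (simp add: complex_eq_iff)
    finally show ?thesis by (simp add: d_def)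
  qed
  have dadd: "d (x+y) (x+y) = d x x + d x y + d y x + d y y" for x y
    unfolding d_def using lin by (simp add: clinear_add cinner_add_left cinner_add_right algebra_simps)
  have di: "d (x + scaleC \<i> y) (x + scaleC \<i> y) = d x x + \<i> * d x y - \<i> * d y x + d y y" for x y
  proof -
    have "d (x + scaleC \<i> y) (x + scaleC \<i> y) = d x x + \<i> * d x y + cnj \<i> * d y x + cnj \<i> * \<i> * d y y"
      unfolding d_def using lin
      by (simp add: clinear_add clinear_scaleC cinner_add_left cinner_add_right cinner_scaleC_left
          cinner_scaleC_right algebra_simps)
    then show ?thesis by simp
  qed
  have "d x y = 0" for x y
  proof -
    have 1: "d x y + d y x = 0" using dadd[of x y] diag by simp
    have 2: "\<i> * d x y - \<i> * d y x = 0" using di[of x y] diag by simp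
    then have "d x y - d y x = 0" by (simp add: right_diff_distrib[symmetric])
    with 1 show ?thesis by simp
  qed
  then show ?thesis unfolding hermitian_def d_def by simp
qed

lemma sum_pair_UNIV: "(\<Sum>q\<in>(UNIV::('a::finite \<times> 'b::finite) set). f q) = (\<Sum>a\<in>UNIV. \<Sum>b\<in>UNIV. f (a,b))"
  unfolding UNIV_Times_UNIV[symmetric] sum.cartesian_product by simp

definition EL :: "('x::finite \<Rightarrow> 'x \<Rightarrow> 'x \<Rightarrow> 'x \<Rightarrow> ('h::complex_inner \<Rightarrow> 'h)) \<Rightarrow> 'h^('x\<times>'x) \<Rightarrow> 'h^('x\<times>'x)" where
  "EL E \<xi> = (\<chi> p. \<Sum>q\<in>UNIV. E (fst p) (fst q) (snd p) (snd q) (\<xi> $ q))"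

lemma EL_nth: "EL E \<xi> $ p = (\<Sum>q\<in>UNIV. E (fst p) (fst q) (snd p) (snd q) (\<xi> $ q))"
  by (simp add: EL_def)

lemma som_lin: "stochastic_operator_matrix E \<Longrightarrow> clinear (E x x' a a')"
  unfolding stochastic_operator_matrix_def bounded_clinear_def by blast

lemma som_bcl: "stochastic_operator_matrix E \<Longrightarrow> bounded_clinear (E x x' a a')"
  unfolding stochastic_operator_matrix_def by blast

lemma EL_bcl:
  assumes "stochastic_operator_matrix E"
  shows "bounded_clinear (EL E)"
  unfolding EL_def
  by (intro bcl_vec) (simp, intro bcl_sum bcl_compose[OF som_bcl[OF assms] bcl_nth])

lemma EL_quad:
  "cinner \<xi> (EL E \<xi>) = (\<Sum>x\<in>UNIV. \<Sum>x'\<in>UNIV. \<Sum>a\<in>UNIV. \<Sum>a'\<in>UNIV.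
                 cinner (\<xi> $ (x,a)) (E x x' a a' (\<xi> $ (x',a'))))"
proof -
  have "cinner \<xi> (EL E \<xi>) = (\<Sum>p\<in>UNIV. \<Sum>q\<in>UNIV. cinner (\<xi> $ p) (E (fst p) (fst q) (snd p) (snd q) (\<xi> $ q)))"
    by (simp add: cinner_vec_def EL_nth cinner_sum_right)
  also have "\<dots> = (\<Sum>x\<in>UNIV. \<Sum>a\<in>UNIV. \<Sum>x'\<in>UNIV. \<Sum>a'\<in>UNIV. cinner (\<xi> $ (x,a)) (E x x' a a' (\<xi> $ (x',a'))))"
    by (simp add: sum_pair_UNIV)
  also have "\<dots> = (\<Sum>x\<in>UNIV. \<Sum>x'\<in>UNIV. \<Sum>a\<in>UNIV. \<Sum>a'\<in>UNIV. cinner (\<xi> $ (x,a)) (E x x' a a' (\<xi> $ (x',a'))))"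
    by (rule sum.cong[OF refl], rule sum.swap)
  finally show ?thesis .
qed

lemma EL_pos:
  assumes "stochastic_operator_matrix E"
  shows "Im (cinner \<xi> (EL E \<xi>)) = 0" "0 \<le> Re (cinner \<xi> (EL E \<xi>))"
proof -
  have "positive_block E" using assms unfolding stochastic_operator_matrix_def by blast
  then have "(let q = (\<Sum>x\<in>UNIV. \<Sum>x'\<in>UNIV. \<Sum>a\<in>UNIV. \<Sum>a'\<in>UNIV.
                 cinner ((\<lambda>x a. \<xi> $ (x,a)) x a) (E x x' a a' ((\<lambda>x a. \<xi> $ (x,a)) x' a')))
      in Im q = 0 \<and> 0 \<le> Re q)"
    unfolding positive_block_def by (rule allE)
  then show "Im (cinner \<xi> (EL E \<xi>)) = 0" "0 \<le> Re (cinner \<xi> (EL E \<xi>))"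
    unfolding EL_quad Let_def by auto
qed

lemma EL_herm:
  assumes "stochastic_operator_matrix E"
  shows "hermitian (EL E)"
  by (rule hermitian_from_real[OF bcl_clinear[OF EL_bcl[OF assms]] EL_pos(1)[OF assms]])

lemma EL_posop:
  assumes "stochastic_operator_matrix E"
  shows "posop (EL E)"
  unfolding posop_def using EL_pos(2)[OF assms] by blast

lemma som_stoch: "stochastic_operator_matrix E \<Longrightarrow> (\<Sum>a\<in>UNIV. E x x' a a h) = (if x = x' then h else 0)"
  unfolding stochastic_operator_matrix_def by blast

definition Jm :: "('h::complex_inner^('x::finite\<times>'x) \<Rightarrow> 'h^('x\<times>'x)) \<Rightarrow> 'h^'x \<Rightarrow> ('h^('x\<times>'x))^'x" where
  "Jm R w = (\<chi> a. R (\<chi> q. if snd q = a then w $ fst q else 0))"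

definition Jsm :: "('h::complex_inner^('x::finite\<times>'x) \<Rightarrow> 'h^('x\<times>'x)) \<Rightarrow> ('h^('x\<times>'x))^'x \<Rightarrow> 'h^'x" where
  "Jsm R \<beta> = (\<chi> x. \<Sum>a\<in>UNIV. (R (\<beta> $ a)) $ (x, a))"

lemma Jm_bcl: fixes R :: "'h::complex_inner^('x::finite\<times>'x) \<Rightarrow> 'h^('x\<times>'x)"
  assumes "bounded_clinear R" shows "bounded_clinear (Jm R)"
proof -
  have i: "bounded_clinear (\<lambda>w::'h^'x. (\<chi> q. if snd q = a then w $ fst q else 0) :: 'h^('x\<times>'x))" for a
  proof (rule bcl_vec)
    fix q :: "'x\<times>'x"
    show "bounded_clinear (\<lambda>w::'h^'x. (\<chi> q. if snd q = a then w $ fst q else 0) $ q)"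
      by simp (rule bcl_if[OF bcl_nth])
  qed
  show ?thesis unfolding Jm_def
    by (rule bcl_vec) (simp, rule bcl_compose[OF assms i])
qed

lemma Jsm_bcl: fixes R :: "'h::complex_inner^('x::finite\<times>'x) \<Rightarrow> 'h^('x\<times>'x)"
  assumes "bounded_clinear R" shows "bounded_clinear (Jsm R)"
  unfolding Jsm_def
proof (rule bcl_vec)
  fix x :: 'x
  have "bounded_clinear (\<lambda>\<beta>::('h^('x\<times>'x))^'x. R (\<beta> $ a) $ (x, a))" for a
    by (rule bcl_compose[OF bcl_nth bcl_compose[OF assms bcl_nth]])
  then show "bounded_clinear (\<lambda>\<beta>::('h^('x\<times>'x))^'x. (\<chi> x. \<Sum>a\<in>UNIV. R (\<beta> $ a) $ (x, a)) $ x)"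
    by simp (rule bcl_sum)
qed

lemma Jm_adj:
  assumes hR: "hermitian R"
  shows "cinner (Jm R w) \<beta> = cinner w (Jsm R \<beta>)"
proof -
  have "cinner (Jm R w) \<beta> = (\<Sum>a\<in>UNIV. cinner (Jm R w $ a) (\<beta> $ a))"
    by (rule cinner_vec_def)
  also have "\<dots> = (\<Sum>a\<in>UNIV. cinner (\<chi> q. if snd q = a then w $ fst q else 0) (R (\<beta> $ a)))"
    unfolding Jm_def using hR by (simp add: hermitian_eq)
  also have "\<dots> = (\<Sum>a\<in>UNIV. \<Sum>q\<in>UNIV. if snd q = a then cinner (w $ fst q) (R (\<beta> $ a) $ q) else 0)"
    unfolding cinner_vec_def by (intro sum.cong refl) auto
  also have "\<dots> = (\<Sum>a\<in>UNIV. \<Sum>y\<in>UNIV. cinner (w $ y) (R (\<beta> $ a) $ (y, a)))"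
    by (simp add: sum_pair_UNIV)
  also have "\<dots> = cinner w (Jsm R \<beta>)"
    unfolding Jsm_def cinner_vec_def by (simp add: cinner_sum_right) (rule sum.swap)
  finally show ?thesis .
qed

lemma Jsm_Jm:
  assumes E: "stochastic_operator_matrix E" and RR: "\<And>\<xi>. R (R \<xi>) = EL E \<xi>"
  shows "Jsm R (Jm R w) = w"
proof -
  have "Jsm R (Jm R w) $ x = w $ x" for x
  proof -
    have "Jsm R (Jm R w) $ x = (\<Sum>a\<in>UNIV. EL E (\<chi> q. if snd q = a then w $ fst q else 0) $ (x, a))"
      unfolding Jsm_def Jm_def by (simp add: RR)
    also have "\<dots> = (\<Sum>a\<in>UNIV. \<Sum>x'\<in>UNIV. E x x' a a (w $ x'))"
      unfolding EL_nth sum_pair_UNIV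
      by (intro sum.cong refl) (simp add: if_distrib clinear_zero[OF som_lin[OF E]] cong: if_cong)
    also have "\<dots> = (\<Sum>x'\<in>UNIV. \<Sum>a\<in>UNIV. E x x' a a (w $ x'))"
      by (rule sum.swap)
    also have "\<dots> = (\<Sum>x'\<in>UNIV. if x = x' then w $ x' else 0)"
      using som_stoch[OF E] by simp
    also have "\<dots> = w $ x" by simp
    finally show ?thesis .
  qed
  then show ?thesis by (simp add: vec_eq_iff)
qed

definition projA :: "('h::complex_inner^('p::finite option))^'x::finite \<Rightarrow> 'h^'x" where
  "projA v = (\<chi> x. v $ x $ None)"
definition projB :: "('h::complex_inner^('p::finite option))^'x::finite \<Rightarrow> ('h^'p)^'x" where
  "projB v = (\<chi> x. \<chi> p. v $ x $ Some p)"
definition inA :: "'h::complex_inner^'x::finite \<Rightarrow> ('h^('p::finite option))^'x" where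
  "inA w = (\<chi> x. \<chi> i. if i = None then w $ x else 0)"
definition inB :: "('h::complex_inner^'p::finite)^'x::finite \<Rightarrow> ('h^('p option))^'x" where
  "inB b = (\<chi> x. \<chi> i. case i of None \<Rightarrow> 0 | Some p \<Rightarrow> b $ x $ p)"

lemma projA_nth[simp]: "projA v $ x = v $ x $ None" by (simp add: projA_def)
lemma projB_nth[simp]: "projB v $ x $ p = v $ x $ Some p" by (simp add: projB_def)
lemma inA_nth[simp]: "inA w $ x $ i = (if i = None then w $ x else 0)" by (simp add: inA_def)
lemma inB_nth_None[simp]: "inB b $ x $ None = 0" by (simp add: inB_def)
lemma inB_nth_Some[simp]: "inB b $ x $ Some p = b $ x $ p" by (simp add: inB_def)

lemma projA_inA[simp]: "projA (inA w :: ('h::complex_inner^('p::finite option))^'x::finite) = w"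
  by (simp add: vec_eq_iff)
lemma projA_inB[simp]: "projA (inB b) = 0" by (simp add: vec_eq_iff)
lemma projB_inA[simp]: "projB (inA w :: ('h::complex_inner^('p::finite option))^'x::finite) = 0"
  by (simp add: vec_eq_iff)
lemma projB_inB[simp]: "projB (inB b) = b" by (simp add: vec_eq_iff)
lemma projA_add[simp]: "projA (u + v) = projA u + projA v" by (simp add: vec_eq_iff)
lemma projB_add[simp]: "projB (u + v) = projB u + projB v" by (simp add: vec_eq_iff)
lemma inA_add: "inA (u + v) = inA u + inA v" by (simp add: vec_eq_iff)
lemma inB_add: "inB (u + v) = inB u + inB v"
proof -
  have "inB (u + v) $ x $ i = (inB u + inB v) $ x $ i" for x i by (cases i) simp_all
  then show ?thesis by (simp add: vec_eq_iff)
qed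

lemma decomp: "inA (projA v) + inB (projB v) = v"
proof -
  have "(inA (projA v) + inB (projB v)) $ x $ i = v $ x $ i" for x i
    by (cases i) simp_all
  then show ?thesis by (simp add: vec_eq_iff)
qed

lemma vec_ext_eq: "(\<And>x i. u $ x $ i = v $ x $ i) \<Longrightarrow> u = v"
  by (simp add: vec_eq_iff)

lemma sum_option_UNIV: "(\<Sum>i\<in>(UNIV::'p::finite option set). f i) = f None + (\<Sum>p\<in>UNIV. f (Some p))"
proof -
  have "(UNIV::'p option set) = insert None (range Some)" by (rule UNIV_option_conv)
  then have "(\<Sum>i\<in>(UNIV::'p option set). f i) = sum f (insert None (range Some))" by simp
  also have "\<dots> = f None + sum f (range Some)" by (rule sum.insert) auto
  also have "sum f (range Some) = (\<Sum>p\<in>UNIV. f (Some p))" by (simp add: sum.reindex)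
  finally show ?thesis .
qed

lemma cinner_split: "cinner v v' = cinner (projA v) (projA v') + cinner (projB v) (projB v')"
  unfolding cinner_vec_def[of v v'] cinner_vec_def[of "projA v"] cinner_vec_def[of "projB v"]
  by (simp add: cinner_vec_def sum_option_UNIV sum.distrib)

definition Gm :: "('h::complex_inner^('x::finite\<times>'x) \<Rightarrow> 'h^('x\<times>'x)) \<Rightarrow> ('h^(('x\<times>'x) option))^'x \<Rightarrow> ('h^(('x\<times>'x) option))^'x" where
  "Gm R v = inA (Jsm R (projB v)) + inB (Jm R (projA v) + projB v - Jm R (Jsm R (projB v)))"

lemma projA_Gm: "projA (Gm R v) = Jsm R (projB v)" by (simp add: Gm_def)
lemma projB_Gm: "projB (Gm R v) = Jm R (projA v) + projB v - Jm R (Jsm R (projB v))" by (simp add: Gm_def)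

lemma Gm_Gm:
  assumes bR: "bounded_clinear R" and JJ: "\<And>w. Jsm R (Jm R w) = w"
  shows "Gm R (Gm R v) = v"
proof -
  have lJ: "clinear (Jm R)" and lJs: "clinear (Jsm R)"
    using Jm_bcl[OF bR] Jsm_bcl[OF bR] by (simp_all add: bcl_clinear)
  define a where "a = projA v"
  define b where "b = projB v"
  have "Jsm R (projB (Gm R v)) = a"
    unfolding projB_Gm a_def[symmetric] b_def[symmetric]
    using lJs by (simp add: clinear_add clinear_diff JJ)
  then have "Gm R (Gm R v) = inA a + inB (Jm R (Jsm R b) + (Jm R a + b - Jm R (Jsm R b)) - Jm R a)"
    unfolding Gm_def[of R "Gm R v"] projA_Gm projB_Gm a_def[symmetric] b_def[symmetric]
    by simp
  also have "\<dots> = inA a + inB b" by simp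
  also have "\<dots> = v" unfolding a_def b_def by (rule decomp)
  finally show ?thesis .
qed

lemma Jm_adj':
  assumes hR: "hermitian R"
  shows "cinner \<beta> (Jm R w) = cinner (Jsm R \<beta>) w"
  using Jm_adj[OF hR, of w \<beta>] by (metis cinner_conj)

lemma Gm_herm:
  assumes bR: "bounded_clinear R" and hR: "hermitian R"
  shows "hermitian (Gm R)"
  unfolding hermitian_def
proof (intro allI)
  fix v v' :: "('a^(('b\<times>'b) option))^'b"
  have lJ: "clinear (Jm R)" and lJs: "clinear (Jsm R)"
    using Jm_bcl[OF bR] Jsm_bcl[OF bR] by (simp_all add: bcl_clinear)
  define a where "a = projA v"
  define b where "b = projB v"
  define a' where "a' = projA v'"
  define b' where "b' = projB v'"
  have 1: "cinner (Gm R v) v' = cinner (Jsm R b) a' + cinner (Jm R a) b' + cinner b b' - cinner (Jm R (Jsm R b)) b'"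
    unfolding cinner_split[of "Gm R v"] projA_Gm projB_Gm a_def[symmetric] b_def[symmetric] a'_def[symmetric] b'_def[symmetric]
    by (simp add: cinner_add_left cinner_diff_left)
  have 2: "cinner v (Gm R v') = cinner a (Jsm R b') + cinner b (Jm R a') + cinner b b' - cinner b (Jm R (Jsm R b'))"
    unfolding cinner_split[of v] projA_Gm projB_Gm a_def[symmetric] b_def[symmetric] a'_def[symmetric] b'_def[symmetric]
    by (simp add: cinner_add_right cinner_diff_right)
  show "cinner (Gm R v) v' = cinner v (Gm R v')"
    unfolding 1 2 using Jm_adj[OF hR] Jm_adj'[OF hR] by simp
qed

lemma projA_bcl: "bounded_clinear (projA :: ('h::complex_inner^('p::finite option))^'x::finite \<Rightarrow> 'h^'x)"
  unfolding projA_def by (rule bcl_vec) (simp, rule bcl_compose[OF bcl_nth bcl_nth])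

lemma projB_bcl: "bounded_clinear (projB :: ('h::complex_inner^('p::finite option))^'x::finite \<Rightarrow> ('h^'p)^'x)"
  unfolding projB_def by (rule bcl_vec, simp, rule bcl_vec, simp, rule bcl_compose[OF bcl_nth bcl_nth])

lemma inA_bcl: "bounded_clinear (inA :: 'h::complex_inner^'x::finite \<Rightarrow> ('h^('p::finite option))^'x)"
  unfolding inA_def by (rule bcl_vec, simp, rule bcl_vec, simp, rule bcl_if[OF bcl_nth])

lemma inB_bcl: "bounded_clinear (inB :: ('h::complex_inner^'p::finite)^'x::finite \<Rightarrow> ('h^('p option))^'x)"
proof -
  have "bounded_clinear (\<lambda>b::('h^'p)^'x. case i of None \<Rightarrow> 0 | Some p \<Rightarrow> b $ x $ p)" for x i
    by (cases i) (simp_all add: bcl_zero bcl_compose[OF bcl_nth bcl_nth])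
  then show ?thesis unfolding inB_def by (intro bcl_vec) simp
qed

lemma Gm_bcl:
  assumes bR: "bounded_clinear R"
  shows "bounded_clinear (Gm R)"
proof -
  note J = Jm_bcl[OF bR] and Js = Jsm_bcl[OF bR]
  have 1: "bounded_clinear (\<lambda>v. inA (Jsm R (projB v)) :: ('a^(('b\<times>'b) option))^'b)"
    by (rule bcl_compose[OF inA_bcl bcl_compose[OF Js projB_bcl]])
  have 2: "bounded_clinear (\<lambda>v::('a^(('b\<times>'b) option))^'b. Jm R (projA v) + projB v - Jm R (Jsm R (projB v)))"
    by (rule bcl_diff[OF bcl_add[OF bcl_compose[OF J projA_bcl] projB_bcl] bcl_compose[OF J bcl_compose[OF Js projB_bcl]]])
  show ?thesis unfolding Gm_def[abs_def]
    by (rule bcl_add[OF 1 bcl_compose[OF inB_bcl 2]])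
qed

definition dlt :: "'x::finite \<Rightarrow> 'k::complex_inner \<Rightarrow> 'k^'x" where
  "dlt x k = (\<chi> y. if y = x then k else 0)"

lemma dlt_nth[simp]: "dlt x k $ y = (if y = x then k else 0)" by (simp add: dlt_def)

lemma dlt_bcl: "bounded_clinear (dlt x :: 'k::complex_inner \<Rightarrow> 'k^'x::finite)"
  unfolding dlt_def by (rule bcl_vec) (simp, rule bcl_if[OF bcl_id])

lemma dlt_zero[simp]: "dlt x 0 = 0" by (simp add: vec_eq_iff)

lemma cinner_dlt_left: "cinner (dlt x k) w = cinner k (w $ x)"
proof -
  have "cinner (dlt x k $ i) (w $ i) = (if i = x then cinner k (w $ i) else 0)" for i by simp
  then show ?thesis unfolding cinner_vec_def by simp
qed

lemma cinner_dlt_right: "cinner w (dlt x k) = cinner (w $ x) k"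
proof -
  have "cinner (w $ i) (dlt x k $ i) = (if i = x then cinner (w $ i) k else 0)" for i by simp
  then show ?thesis unfolding cinner_vec_def by simp
qed

lemma sum_dlt: "(\<Sum>x\<in>UNIV. dlt x (v $ x)) = v"
  by (simp add: vec_eq_iff if_distrib cong: if_cong)

definition Um :: "('h::complex_inner^('x::finite\<times>'x) \<Rightarrow> 'h^('x\<times>'x)) \<Rightarrow> 'x \<Rightarrow> 'x \<Rightarrow> 'h^(('x\<times>'x) option) \<Rightarrow> 'h^(('x\<times>'x) option)" where
  "Um R a x k = Gm R (dlt x k) $ a"

lemma block_op_Um:
  assumes bR: "bounded_clinear R"
  shows "block_op (Um R) = Gm R"
proof
  fix v
  have lG: "clinear (Gm R)" using Gm_bcl[OF bR] by (rule bcl_clinear)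
  have "block_op (Um R) v = (\<chi> a. (\<Sum>x\<in>UNIV. Gm R (dlt x (v $ x))) $ a)"
    unfolding block_op_def Um_def by simp
  also have "\<dots> = (\<chi> a. Gm R (\<Sum>x\<in>UNIV. dlt x (v $ x)) $ a)" using lG by (simp add: clinear_sum)
  also have "\<dots> = Gm R v" by (simp add: sum_dlt)
  finally show "block_op (Um R) v = Gm R v" .
qed

lemma Um_bcl: "bounded_clinear R \<Longrightarrow> bounded_clinear (Um R a x)"
  unfolding Um_def[abs_def] by (rule bcl_compose[OF bcl_nth bcl_compose[OF Gm_bcl dlt_bcl]])

lemma Um_adj:
  assumes bR: "bounded_clinear R" and hR: "hermitian R"
  shows "is_cadjoint (Um R a x) (Um R x a)"
  unfolding is_cadjoint_def Um_def
proof (intro allI)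
  fix k k'
  have "cinner (Gm R (dlt x k) $ a) k' = cinner (Gm R (dlt x k)) (dlt a k')" by (simp add: cinner_dlt_right)
  also have "\<dots> = cinner (dlt x k) (Gm R (dlt a k'))" using Gm_herm[OF bR hR] by (simp add: hermitian_eq)
  also have "\<dots> = cinner k (Gm R (dlt a k') $ x)" by (simp add: cinner_dlt_left)
  finally show "cinner (Gm R (dlt x k) $ a) k' = cinner k (Gm R (dlt a k') $ x)" .
qed

lemma Gm_unitary:
  assumes bR: "bounded_clinear R" and hR: "hermitian R" and JJ: "\<And>w. Jsm R (Jm R w) = w"
  shows "is_unitary (Gm R)"
  unfolding is_unitary_def
proof (intro conjI exI)
  show "bounded_clinear (Gm R)" by (rule Gm_bcl[OF bR])
  show "is_cadjoint (Gm R) (Gm R)" using Gm_herm[OF bR hR] by (simp add: is_cadjoint_def hermitian_def)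
  show "Gm R \<circ> Gm R = id" "Gm R \<circ> Gm R = id" using Gm_Gm[OF bR JJ] by (auto simp: fun_eq_iff)
qed

lemma W_adj: "is_cadjoint (dlt None :: 'k::complex_inner \<Rightarrow> 'k^('p::finite option)) (\<lambda>k. k $ None)"
  unfolding is_cadjoint_def by (simp add: cinner_dlt_left)

lemma W_iso: "is_isometry (dlt None :: 'k::complex_inner \<Rightarrow> 'k^('p::finite option))"
  unfolding is_isometry_def
proof (intro conjI allI)
  show "bounded_clinear (dlt None :: 'k::complex_inner \<Rightarrow> 'k^('p::finite option))" by (rule dlt_bcl)
  fix h :: 'k
  have "cinner (dlt None h :: 'k^('p option)) (dlt None h) = cinner h h" by (simp add: cinner_dlt_left)
  then show "norm (dlt None h :: 'k^('p option)) = norm h" by (simp add: norm_cinner)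
qed

lemma final_eval:
  fixes E :: "'x::finite \<Rightarrow> 'x \<Rightarrow> 'x \<Rightarrow> 'x \<Rightarrow> ('h::complex_inner \<Rightarrow> 'h)"
    and R :: "'h^('x\<times>'x) \<Rightarrow> 'h^('x\<times>'x)"
  assumes E: "stochastic_operator_matrix E" and bR: "bounded_clinear R"
    and RR: "\<And>\<xi>. R (R \<xi>) = EL E \<xi>"
  shows "Gm R (dlt a (Gm R (dlt x' (dlt None h)) $ a')) $ x $ None = E x x' a a' h"
proof -
  have lJ: "clinear (Jm R)" and lJs: "clinear (Jsm R)" and lR: "clinear R"
    using Jm_bcl[OF bR] Jsm_bcl[OF bR] bR by (simp_all add: bcl_clinear)
  have pA1: "projA (dlt x' (dlt None h) :: ('h^(('x\<times>'x) option))^'x) = dlt x' h" by (simp add: vec_eq_iff)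
  have pB1: "projB (dlt x' (dlt None h) :: ('h^(('x\<times>'x) option))^'x) = 0" by (simp add: vec_eq_iff)
  have inA0: "inA 0 = (0 :: ('h^(('x\<times>'x) option))^'x)" by (simp add: vec_eq_iff)
  have G1: "Gm R (dlt x' (dlt None h)) = inB (Jm R (dlt x' h))"
    unfolding Gm_def pA1 pB1 using lJ lJs by (simp add: clinear_zero inA0)
  define \<beta> where "\<beta> = Jm R (dlt x' h) $ a'"
  have pA2: "projA (dlt a (inB (Jm R (dlt x' h)) $ a')) = 0" by (simp add: vec_eq_iff)
  have pB2: "projB (dlt a (inB (Jm R (dlt x' h)) $ a')) = dlt a \<beta>" by (simp add: vec_eq_iff \<beta>_def)
  have "Gm R (dlt a (Gm R (dlt x' (dlt None h)) $ a')) $ x $ None = Jsm R (dlt a \<beta>) $ x"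
    unfolding G1 unfolding Gm_def pA2 pB2 by simp
  also have "\<dots> = R \<beta> $ (x, a)"
  proof -
    have "R (dlt a \<beta> $ b) $ (x, b) = (if b = a then R \<beta> $ (x, a) else 0)" for b
      using clinear_zero[OF lR] by simp
    then show ?thesis unfolding Jsm_def by simp
  qed
  also have "R \<beta> = EL E (\<chi> q. if snd q = a' then dlt x' h $ fst q else 0)"
    unfolding \<beta>_def Jm_def by (simp add: RR)
  also have "EL E (\<chi> q. if snd q = a' then dlt x' h $ fst q else 0) $ (x, a) = E x x' a a' h"
  proof -
    have "E x y a b ((\<chi> q. if snd q = a' then dlt x' h $ fst q else 0) $ (y, b)) = (if y = x' then (if b = a' then E x x' a a' h else 0) else 0)" for y b
      using clinear_zero[OF som_lin[OF E]] by simp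
    moreover have "(\<Sum>b\<in>UNIV. if y = x' then (if b = a' then E x x' a a' h else 0) else 0) = (if y = x' then E x x' a a' h else 0)" for y
      by (cases "y = x'") simp_all
    ultimately show ?thesis unfolding EL_nth sum_pair_UNIV by simp
  qed
  finally show ?thesis .
qed

theorem mainTheorem19:
  fixes E :: "'x::finite \<Rightarrow> 'x \<Rightarrow> 'x \<Rightarrow> 'x \<Rightarrow> ('h::chilbert_space \<Rightarrow> 'h)"
  assumes "stochastic_operator_matrix E"
  shows "\<exists>(W :: 'h \<Rightarrow> 'h ^ (('x \<times> 'x) option))
           (U :: 'x \<Rightarrow> 'x \<Rightarrow> ('h ^ (('x \<times> 'x) option) \<Rightarrow> 'h ^ (('x \<times> 'x) option))).
           is_isometry W \<and> block_unitary U \<and>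
           (\<forall>x x' a a'. E x x' a a' = cadjoint W \<circ> cadjoint (U a x) \<circ> U a' x' \<circ> W)"
proof -
  obtain R where bR: "bounded_clinear R" and hR: "hermitian R" and RR: "\<And>\<xi>. R (R \<xi>) = EL E \<xi>"
    using op_sqrt[OF EL_bcl[OF assms] EL_herm[OF assms] EL_posop[OF assms]] by blast
  have JJ: "\<And>w. Jsm R (Jm R w) = w" by (rule Jsm_Jm[OF assms RR])
  have iso: "is_isometry (dlt None :: 'h \<Rightarrow> 'h ^ (('x \<times> 'x) option))" by (rule W_iso)
  have bu: "block_unitary (Um R)"
    unfolding block_unitary_def block_op_Um[OF bR]
    using Um_bcl[OF bR] Gm_unitary[OF bR hR JJ] by blast
  have Wadj: "cadjoint (dlt None :: 'h \<Rightarrow> 'h ^ (('x \<times> 'x) option)) = (\<lambda>k. k $ None)"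
    by (rule cadjoint_eqI[OF W_adj])
  have Uadj: "cadjoint (Um R a x) = Um R x a" for a x
    by (rule cadjoint_eqI[OF Um_adj[OF bR hR]])
  have eq: "E x x' a a' = cadjoint (dlt None) \<circ> cadjoint (Um R a x) \<circ> Um R a' x' \<circ> (dlt None :: 'h \<Rightarrow> 'h ^ (('x \<times> 'x) option))"
    for x x' a a'
  proof
    fix h
    show "E x x' a a' h = (cadjoint (dlt None) \<circ> cadjoint (Um R a x) \<circ> Um R a' x' \<circ> (dlt None :: 'h \<Rightarrow> 'h ^ (('x \<times> 'x) option))) h"
      unfolding Wadj Uadj using final_eval[OF assms bR RR, of a x' h a' x]
      by (simp add: Um_def)
  qed
  show ?thesis using iso bu eq by blast
qed

end
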